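(* Let $\mathcal{H}$ be a hypertree. Then the edges of $Comp(\mathcal{H})$ are exactly the nonempty subsets of $V(\mathcal{H})$ that induce a subtree of every host tree of $\mathcal{H}$. Additionally, if $\mathcal{H}'$ is a hypertree equivalent to $\mathcal{H}$, then $E(Simp(\mathcal{H}'))\subseteq E(Comp(\mathcal{H}))$.
   Context: A hypergraph $\mathcal{H}$ has a finite vertex set $V(\mathcal{H})$ and a finite family $E(\mathcal{H})$ (repetitions allowed) of nonempty subsets (edges). A host tree of $\mathcal{H}$ is a tree with vertex set $V(\mathcal{H})$ in which every edge induces a connected subgraph; $\mathcal{H}$ is a hypertree if it has one. Two hypergraphs on the same vertex set are equivalent if they have the same host trees. $Simp(\mathcal{H})$ is obtained from $\mathcal{H}$ by deleting repeated edges. A union of sets is connected if the intersection graph of the sets is connected. $Comp(\mathcal{H})$ is the hypergraph without repeated edges on $V(\mathcal{H})$ whose edges are $V(\mathcal{H})$, all one-element subsets, and all proper subsets of $V(\mathcal{H})$ obtainable from edges of $\mathcal{H}$ by repeated nonempty intersections and connected unions. *)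

theory Defs
  imports Main "HOL-Library.Multiset"
begin

definition hypergraph :: "'a set \<Rightarrow> 'a set multiset \<Rightarrow> bool" where
  "hypergraph V E \<longleftrightarrow> finite V \<and> (\<forall>X \<in># E. X \<noteq> {} \<and> X \<subseteq> V)"

(* Graphs on a vertex set are given by a set of (undirected) edges, each a
   2-element set.  Adjacency in the subgraph induced on S: *)
definition adj :: "'a set \<Rightarrow> 'a set set \<Rightarrow> ('a \<times> 'a) set" where
  "adj S T = {(u, v). u \<in> S \<and> v \<in> S \<and> {u, v} \<in> T}"

definition graph_connected :: "'a set \<Rightarrow> 'a set set \<Rightarrow> bool" where
  "graph_connected S T \<longleftrightarrow> (\<forall>u\<in>S. \<forall>v\<in>S. (u, v) \<in> (adj S T)\<^sup>*)"

(* A tree with vertex set V: nonempty finite vertex set, simple edges inside V,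
   connected, and acyclic (no edge lies on a cycle, i.e. deleting any edge
   disconnects the graph). *)
definition is_tree :: "'a set \<Rightarrow> 'a set set \<Rightarrow> bool" where
  "is_tree V T \<longleftrightarrow> finite V \<and> V \<noteq> {}
     \<and> (\<forall>e\<in>T. \<exists>u v. e = {u, v} \<and> u \<noteq> v \<and> u \<in> V \<and> v \<in> V)
     \<and> graph_connected V T
     \<and> (\<forall>e\<in>T. \<not> graph_connected V (T - {e}))"

definition host_tree :: "'a set \<Rightarrow> 'a set multiset \<Rightarrow> 'a set set \<Rightarrow> bool" where
  "host_tree V E T \<longleftrightarrow> is_tree V T \<and> (\<forall>X \<in># E. graph_connected X T)"

definition hypertree :: "'a set \<Rightarrow> 'a set multiset \<Rightarrow> bool" where
  "hypertree V E \<longleftrightarrow> hypergraph V E \<and> (\<exists>T. host_tree V E T)"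

definition equivalent :: "'a set \<Rightarrow> 'a set multiset \<Rightarrow> 'a set multiset \<Rightarrow> bool" where
  "equivalent V E E' \<longleftrightarrow> (\<forall>T. host_tree V E T \<longleftrightarrow> host_tree V E' T)"

definition simp_edges :: "'a set multiset \<Rightarrow> 'a set set" where
  "simp_edges E = set_mset E"

definition family_connected :: "'a set set \<Rightarrow> bool" where
  "family_connected F \<longleftrightarrow>
     (\<forall>A\<in>F. \<forall>B\<in>F. (A, B) \<in> {(X, Y). X \<in> F \<and> Y \<in> F \<and> X \<inter> Y \<noteq> {}}\<^sup>*)"

inductive_set gen_closure :: "'a set multiset \<Rightarrow> 'a set set" for E where
  base: "X \<in># E \<Longrightarrow> X \<in> gen_closure E"
| inter: "A \<in> gen_closure E \<Longrightarrow> B \<in> gen_closure E \<Longrightarrow> A \<inter> B \<noteq> {}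
           \<Longrightarrow> A \<inter> B \<in> gen_closure E"
| union: "\<forall>A\<in>F. A \<in> gen_closure E \<Longrightarrow> finite F \<Longrightarrow> F \<noteq> {} \<Longrightarrow> family_connected F
           \<Longrightarrow> \<Union>F \<in> gen_closure E"

definition comp_edges :: "'a set \<Rightarrow> 'a set multiset \<Rightarrow> 'a set set" where
  "comp_edges V E = {V} \<union> {{v} | v. v \<in> V} \<union> {X \<in> gen_closure E. X \<subset> V}"

definition induces_subtree :: "'a set set \<Rightarrow> 'a set \<Rightarrow> bool" where
  "induces_subtree T S \<longleftrightarrow> S \<noteq> {} \<and> graph_connected S T"

end

theory Submission
  imports Defs
begin

lemma adj_conv: "(adj S F)\<inverse> = adj S F"
  by (auto simp: adj_def insert_commute)

lemma rt_sym: "(a,b) \<in> (adj S F)\<^sup>* \<Longrightarrow> (b,a) \<in> (adj S F)\<^sup>*"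
  by (metis adj_conv rtrancl_converseI)

lemma adj_mono: "S \<subseteq> S' \<Longrightarrow> F \<subseteq> F' \<Longrightarrow> adj S F \<subseteq> adj S' F'"
  by (auto simp: adj_def)

lemma rt_mono: "S \<subseteq> S' \<Longrightarrow> F \<subseteq> F' \<Longrightarrow> (a,b) \<in> (adj S F)\<^sup>* \<Longrightarrow> (a,b) \<in> (adj S' F')\<^sup>*"
  by (rule rtrancl_mono[OF adj_mono, THEN subsetD])

lemma closed_rt:
  assumes "(a,b) \<in> (adj S F)\<^sup>*" "\<And>c d. (c,d) \<in> adj S F \<Longrightarrow> (c \<in> Q \<longleftrightarrow> d \<in> Q)"
  shows "a \<in> Q \<longleftrightarrow> b \<in> Q"
  using assms(1) by (induction rule: rtrancl_induct) (auto dest: assms(2))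

definition side :: "'a set \<Rightarrow> 'a set set \<Rightarrow> 'a set \<Rightarrow> 'a \<Rightarrow> 'a set" where
  "side V T f a = {z. (a,z) \<in> (adj V (T - {f}))\<^sup>*}"

lemma side_closed:
  assumes "c \<in> V" "d \<in> V" "{c,d} \<in> T" "{c,d} \<noteq> f"
  shows "c \<in> side V T f a \<longleftrightarrow> d \<in> side V T f a"
proof -
  have "(c,d) \<in> adj V (T - {f})" "(d,c) \<in> adj V (T - {f})"
    using assms by (auto simp: adj_def insert_commute)
  then show ?thesis unfolding side_def
    by (auto intro: rtrancl.rtrancl_into_rtrancl)
qed

lemma side_self: "a \<in> side V T f a" by (simp add: side_def)

lemma side_subset: "a \<in> V \<Longrightarrow> side V T f a \<subseteq> V"
  unfolding side_def by (auto elim: rtranclE simp: adj_def)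

lemma tree_conn: "is_tree V T \<Longrightarrow> x \<in> V \<Longrightarrow> y \<in> V \<Longrightarrow> (x,y) \<in> (adj V T)\<^sup>*"
  by (auto simp: is_tree_def graph_connected_def)

lemma tree_edge: "is_tree V T \<Longrightarrow> {p,q} \<in> T \<Longrightarrow> p \<in> V \<and> q \<in> V"
  unfolding is_tree_def by (metis doubleton_eq_iff)

lemma side_not:
  assumes T: "is_tree V T" and f: "f = {p,q}" "f \<in> T"
  shows "q \<notin> side V T f p"
proof
  assume "q \<in> side V T f p"
  then have pq: "(p,q) \<in> (adj V (T - {f}))\<^sup>*" by (simp add: side_def)
  have "graph_connected V (T - {f})"
    unfolding graph_connected_def
  proof (intro ballI)
    fix x y assume xy: "x \<in> V" "y \<in> V"
    have "(x,y) \<in> (adj V T)\<^sup>*" by (rule tree_conn[OF T xy])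
    then show "(x,y) \<in> (adj V (T - {f}))\<^sup>*"
    proof (induction rule: rtrancl_induct)
      case base then show ?case by simp
    next
      case (step y z)
      show ?case
      proof (cases "{y,z} = f")
        case True
        then have "(y = p \<and> z = q) \<or> (y = q \<and> z = p)" using f by (metis doubleton_eq_iff)
        moreover have "(q,p) \<in> (adj V (T - {f}))\<^sup>*" by (rule rt_sym[OF pq])
        ultimately have "(y,z) \<in> (adj V (T - {f}))\<^sup>*" using pq by (elim disjE conjE) simp_all
        then show ?thesis using step.IH by (meson rtrancl_trans)
      next
        case False
        then have "(y,z) \<in> adj V (T - {f})" using step.hyps by (auto simp: adj_def)
        then show ?thesis using step.IH by (meson rtrancl.rtrancl_into_rtrancl)
      qed
    qed
  qed
  then show False using T f(2) unfolding is_tree_def by blast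
qed

lemma side_cover:
  assumes T: "is_tree V T" and f: "f = {p,q}" "f \<in> T" and z: "z \<in> V"
  shows "z \<in> side V T f p \<or> z \<in> side V T f q"
proof -
  have pV: "p \<in> V" using tree_edge[OF T] f by simp
  have "(p,z) \<in> (adj V T)\<^sup>*" by (rule tree_conn[OF T pV z])
  then show ?thesis
  proof (induction rule: rtrancl_induct)
    case base then show ?case by (simp add: side_self)
  next
    case (step y z)
    show ?case
    proof (cases "{y,z} = f")
      case True
      then have "z = p \<or> z = q" using f by (auto simp: doubleton_eq_iff)
      then show ?thesis by (auto simp: side_self)
    next
      case False
      then show ?thesis using step side_closed[of y V z T f] by (auto simp: adj_def)
    qed
  qed
qed

lemma side_disj:
  assumes T: "is_tree V T" and f: "f = {p,q}" "f \<in> T"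
  shows "side V T f p \<inter> side V T f q = {}"
proof (rule ccontr)
  assume "side V T f p \<inter> side V T f q \<noteq> {}"
  then obtain z where "(p,z) \<in> (adj V (T - {f}))\<^sup>*" "(q,z) \<in> (adj V (T - {f}))\<^sup>*"
    by (auto simp: side_def)
  then have "(p,q) \<in> (adj V (T - {f}))\<^sup>*" by (meson rt_sym rtrancl_trans)
  then show False using side_not[OF T f] by (simp add: side_def)
qed


lemma side_restrict:
  assumes T: "is_tree V T" and f: "f = {p,q}" "f \<in> T"
    and X: "graph_connected X T" "p \<in> X" "X \<subseteq> V"
  shows "graph_connected (X \<inter> side V T f p) T"
proof -
  have qn: "q \<notin> side V T f p" using side_not[OF T f] .
  have key: "z \<in> side V T f p \<Longrightarrow> (p,z) \<in> (adj (X \<inter> side V T f p) T)\<^sup>*"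
    if "(p,z) \<in> (adj X T)\<^sup>*" for z
    using that
  proof (induction rule: rtrancl_induct)
    case base then show ?case by simp
  next
    case (step y z)
    then have yz: "y \<in> X" "z \<in> X" "{y,z} \<in> T" by (auto simp: adj_def)
    show ?case
    proof (cases "y \<in> side V T f p")
      case True
      then have "(y,z) \<in> adj (X \<inter> side V T f p) T" using yz step.prems by (auto simp: adj_def)
      then show ?thesis using step.IH True by (meson rtrancl.rtrancl_into_rtrancl)
    next
      case False
      have "{y,z} = f"
      proof (rule ccontr)
        assume "{y,z} \<noteq> f"
        then show False using side_closed[of y V z T f p] yz X(3) False step.prems by auto
      qed
      then have "z = p" using f False step.prems qn by (auto simp: doubleton_eq_iff side_self)
      then show ?thesis by simp
    qed
  qed
  show ?thesis unfolding graph_connected_def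
  proof (intro ballI)
    fix x y assume "x \<in> X \<inter> side V T f p" "y \<in> X \<inter> side V T f p"
    then have "(p,x) \<in> (adj (X \<inter> side V T f p) T)\<^sup>*" "(p,y) \<in> (adj (X \<inter> side V T f p) T)\<^sup>*"
      using key X unfolding graph_connected_def by auto
    then show "(x,y) \<in> (adj (X \<inter> side V T f p) T)\<^sup>*" by (meson rt_sym rtrancl_trans)
  qed
qed

lemma crossing:
  assumes T: "is_tree V T" and f: "f = {p,q}" "f \<in> T"
    and Y: "graph_connected Y T" "Y \<subseteq> V" "q \<notin> Y" "y1 \<in> Y" "y2 \<in> Y"
  shows "y1 \<in> side V T f p \<longleftrightarrow> y2 \<in> side V T f p"
proof -
  have "(y1,y2) \<in> (adj Y T)\<^sup>*" using Y unfolding graph_connected_def by auto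
  then show ?thesis
  proof (rule closed_rt)
    fix c d assume "(c,d) \<in> adj Y T"
    then have "c \<in> Y" "d \<in> Y" "{c,d} \<in> T" by (auto simp: adj_def)
    moreover then have "{c,d} \<noteq> f" using f Y(3) by auto
    ultimately show "c \<in> side V T f p \<longleftrightarrow> d \<in> side V T f p"
      using side_closed[of c V d T f p] Y(2) by auto
  qed
qed

lemma inter_conn:
  assumes T: "is_tree V T"
  shows "finite X \<Longrightarrow> X \<subseteq> V \<Longrightarrow> graph_connected X T \<Longrightarrow> Y \<subseteq> V \<Longrightarrow> graph_connected Y T
    \<Longrightarrow> graph_connected (X \<inter> Y) T"
proof (induction "card X" arbitrary: X rule: less_induct)
  case less
  show ?case
  proof (cases "X \<subseteq> Y")
    case True
    then have "X \<inter> Y = X" by auto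
    then show ?thesis using less by simp
  next
    case False
    then obtain q where q: "q \<in> X" "q \<notin> Y" by auto
    show ?thesis unfolding graph_connected_def
    proof (intro ballI)
      fix x y assume xy: "x \<in> X \<inter> Y" "y \<in> X \<inter> Y"
      have "(x,q) \<in> (adj X T)\<^sup>*" using less.prems(3) xy q unfolding graph_connected_def by auto
      moreover have "x \<noteq> q" using xy q by auto
      ultimately obtain p where p: "(x,p) \<in> (adj X T)\<^sup>*" "(p,q) \<in> adj X T"
        by (metis rtranclE)
      define f where "f = {p,q}"
      have fT: "f \<in> T" "p \<in> X" using p(2) by (auto simp: adj_def f_def)
      have sameq: "x \<in> side V T f p \<longleftrightarrow> y \<in> side V T f p"
        using crossing[OF T f_def fT(1) less.prems(5,4) q(2)] xy by auto
      have cov: "x \<in> side V T f p \<or> x \<in> side V T f q"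
        using side_cover[OF T f_def fT(1)] xy less.prems(2) by auto
      have disj: "side V T f p \<inter> side V T f q = {}" using side_disj[OF T f_def fT(1)] .
      have f': "f = {q,p}" by (simp add: f_def insert_commute)
      show "(x,y) \<in> (adj (X \<inter> Y) T)\<^sup>*"
      proof (cases "x \<in> side V T f p")
        case True
        let ?X = "X \<inter> side V T f p"
        have "q \<notin> ?X" using side_not[OF T f_def fT(1)] by auto
        then have "card ?X < card X" using q(1) less.prems(1)
          by (metis Int_lower1 psubset_card_mono psubsetI)
        moreover have "graph_connected ?X T"
          using side_restrict[OF T f_def fT(1) less.prems(3) fT(2) less.prems(2)] .
        ultimately have "graph_connected (?X \<inter> Y) T"
          using less.hyps less.prems by auto
        moreover have "x \<in> ?X \<inter> Y" "y \<in> ?X \<inter> Y" using True sameq xy by auto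
        ultimately show ?thesis unfolding graph_connected_def
          by (meson Int_lower1 inf_mono order_refl rt_mono)
      next
        case False
        then have xq: "x \<in> side V T f q" using cov by auto
        have yq: "y \<in> side V T f q" using False sameq cov
          side_cover[OF T f_def fT(1), of y] xy less.prems(2) by auto
        let ?X = "X \<inter> side V T f q"
        have "q \<in> X" using q by auto
        have "p \<notin> ?X" using side_not[OF T f' fT(1)] by auto
        then have "card ?X < card X" using fT(2) less.prems(1)
          by (metis Int_lower1 psubset_card_mono psubsetI)
        moreover have "graph_connected ?X T"
          using side_restrict[OF T f' fT(1) less.prems(3) q(1) less.prems(2)] .
        ultimately have "graph_connected (?X \<inter> Y) T"
          using less.hyps less.prems by auto
        moreover have "x \<in> ?X \<inter> Y" "y \<in> ?X \<inter> Y" using xq yq xy by auto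
        ultimately show ?thesis unfolding graph_connected_def
          by (meson Int_lower1 inf_mono order_refl rt_mono)
      qed
    qed
  qed
qed

lemma union_conn:
  assumes "family_connected F" "\<forall>A\<in>F. graph_connected A T"
  shows "graph_connected (\<Union>F) T"
  unfolding graph_connected_def
proof (intro ballI)
  fix u v assume "u \<in> \<Union>F" "v \<in> \<Union>F"
  then obtain A B where AB: "A \<in> F" "B \<in> F" "u \<in> A" "v \<in> B" by auto
  let ?r = "{(X, Y). X \<in> F \<and> Y \<in> F \<and> X \<inter> Y \<noteq> {}}"
  have "(A,B) \<in> ?r\<^sup>*" using assms(1) AB unfolding family_connected_def by auto
  then have "\<forall>v\<in>B. (u,v) \<in> (adj (\<Union>F) T)\<^sup>*"
  proof (induction rule: rtrancl_induct)
    case base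
    then show ?case using AB assms(2) unfolding graph_connected_def
      by (meson Sup_upper order_refl rt_mono)
  next
    case (step B C)
    then obtain m where m: "m \<in> B" "m \<in> C" "C \<in> F" by auto
    show ?case
    proof
      fix v assume "v \<in> C"
      then have "(m,v) \<in> (adj C T)\<^sup>*" using m assms(2) unfolding graph_connected_def by auto
      then have "(m,v) \<in> (adj (\<Union>F) T)\<^sup>*" using m by (meson Sup_upper order_refl rt_mono)
      then show "(u,v) \<in> (adj (\<Union>F) T)\<^sup>*" using step.IH m by (meson rtrancl_trans)
    qed
  qed
  then show "(u,v) \<in> (adj (\<Union>F) T)\<^sup>*" using AB by auto
qed

lemma inter_closure:
  "finite K \<Longrightarrow> K \<noteq> {} \<Longrightarrow> K \<subseteq> gen_closure E \<Longrightarrow> \<Inter>K \<noteq> {} \<Longrightarrow> \<Inter>K \<in> gen_closure E"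
proof (induction K rule: finite_ne_induct)
  case (singleton x) then show ?case by simp
next
  case (insert x F)
  then have "\<Inter>F \<in> gen_closure E" by auto
  then show ?case using insert gen_closure.inter[of x E "\<Inter>F"] by auto
qed


lemma swap:
  assumes T: "is_tree V T" and e: "e = {u,v}" "e \<in> T" and w: "w \<in> side V T e u"
    and T': "T' = (T - {e}) \<union> {{w,v}}"
  shows "is_tree V T'"
    and "\<And>X. X \<subseteq> V \<Longrightarrow> graph_connected X T \<Longrightarrow> (u \<in> X \<and> v \<in> X \<longrightarrow> w \<in> X) \<Longrightarrow> graph_connected X T'"
    and "\<And>S. S \<subseteq> V \<Longrightarrow> u \<in> S \<Longrightarrow> v \<in> S \<Longrightarrow> w \<notin> S \<Longrightarrow> \<not> graph_connected S T'"
proof -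
  have uv: "u \<in> V" "v \<in> V" using tree_edge[OF T] e by auto
  have wV: "w \<in> V" using side_subset[OF uv(1)] w by (rule subsetD)
  have vn: "v \<notin> side V T e u" using side_not[OF T e] .
  have e': "e = {v,u}" using e by (simp add: insert_commute)
  have disj: "side V T e u \<inter> side V T e v = {}" using side_disj[OF T e] .
  have wv: "w \<noteq> v" using w vn by auto
  have sub: "adj V (T - {e}) \<subseteq> adj V T'" using T' by (auto simp: adj_def)
  show tree: "is_tree V T'"
    unfolding is_tree_def
  proof (intro conjI)
    show "finite V" "V \<noteq> {}" using T by (auto simp: is_tree_def)
    show "\<forall>e\<in>T'. \<exists>u v. e = {u, v} \<and> u \<noteq> v \<and> u \<in> V \<and> v \<in> V"
      using T T' wv wV uv by (auto simp: is_tree_def)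
    have vz: "(v,z) \<in> (adj V T')\<^sup>*" if "z \<in> V" for z
    proof -
      have "z \<in> side V T e u \<or> z \<in> side V T e v" using side_cover[OF T e that] .
      then show ?thesis
      proof
        assume "z \<in> side V T e v"
        then show ?thesis using sub by (auto simp: side_def intro: rtrancl_mono[THEN subsetD])
      next
        assume "z \<in> side V T e u"
        then have "(u,z) \<in> (adj V T')\<^sup>*" "(u,w) \<in> (adj V T')\<^sup>*"
          using w sub by (auto simp: side_def intro: rtrancl_mono[THEN subsetD])
        moreover have "(v,w) \<in> adj V T'" using T' uv wV by (auto simp: adj_def insert_commute)
        ultimately show ?thesis by (meson converse_rtrancl_into_rtrancl rt_sym rtrancl_trans)
      qed
    qed
    show "graph_connected V T'" unfolding graph_connected_def
      using vz by (meson rt_sym rtrancl_trans)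
    show "\<forall>f\<in>T'. \<not> graph_connected V (T' - {f})"
    proof (intro ballI notI)
      fix f assume fT': "f \<in> T'" and conn: "graph_connected V (T' - {f})"
      show False
      proof (cases "f = {w,v}")
        case True
        then have "T' - {f} \<subseteq> T - {e}" using T' by auto
        then have "(u,v) \<in> (adj V (T - {e}))\<^sup>*"
          using conn uv unfolding graph_connected_def by (meson order_refl rt_mono)
        then show False using vn by (simp add: side_def)
      next
        case False
        then have fT: "f \<in> T" "f \<noteq> e" using fT' T' by auto
        then obtain a b where ab: "f = {a,b}" using T unfolding is_tree_def by blast
        have abV: "a \<in> V" "b \<in> V" using tree_edge[OF T] ab fT by auto
        let ?R = "side V T f a"
        have bR: "b \<notin> ?R" using side_not[OF T ab fT(1)] .
        have aR: "a \<in> ?R" by (rule side_self)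
        obtain D where D: "D = side V T e u \<or> D = side V T e v" "a \<in> D"
          using side_cover[OF T e abV(1)] by blast
        have bD: "b \<in> D" using D side_closed[of a V b T e] abV fT ab by auto
        have Dcl: "c \<in> D \<longleftrightarrow> d \<in> D" if "c \<in> V" "d \<in> V" "{c,d} \<in> T" "{c,d} \<noteq> e" for c d
          using D side_closed[OF that] by auto
        have Rcl: "c \<in> ?R \<longleftrightarrow> d \<in> ?R" if "c \<in> V" "d \<in> V" "{c,d} \<in> T" "{c,d} \<noteq> f" for c d
          using side_closed[OF that] by auto
        have wvD: "(w \<notin> D \<inter> ?R \<and> v \<notin> D \<inter> ?R) \<or> (w \<notin> D - ?R \<and> v \<notin> D - ?R)"
          using D w disj side_self[of v V T e] by auto
        then obtain Q where Q: "Q = D \<inter> ?R \<or> Q = D - ?R" "w \<notin> Q" "v \<notin> Q" by blast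
        have "(a,b) \<in> (adj V (T' - {f}))\<^sup>*" using conn abV unfolding graph_connected_def by auto
        then have "a \<in> Q \<longleftrightarrow> b \<in> Q"
        proof (rule closed_rt)
          fix c d assume "(c,d) \<in> adj V (T' - {f})"
          then have cd: "c \<in> V" "d \<in> V" "{c,d} \<in> T' - {f}" by (auto simp: adj_def)
          show "c \<in> Q \<longleftrightarrow> d \<in> Q"
          proof (cases "{c,d} = {w,v}")
            case True
            then show ?thesis using Q by (auto simp: doubleton_eq_iff)
          next
            case False
            then have "{c,d} \<in> T" "{c,d} \<noteq> e" "{c,d} \<noteq> f" using cd T' by auto
            then show ?thesis using Dcl Rcl cd Q by blast
          qed
        qed
        then show False using Q aR bR D bD by auto
      qed
    qed
  qed


  show "graph_connected X T'" if X: "X \<subseteq> V" "graph_connected X T" "u \<in> X \<and> v \<in> X \<longrightarrow> w \<in> X" for X unfolding graph_connected_def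
  proof (intro ballI)
    fix x y assume "x \<in> X" "y \<in> X"
    then have "(x,y) \<in> (adj X T)\<^sup>*" using X unfolding graph_connected_def by auto
    then show "(x,y) \<in> (adj X T')\<^sup>*"
    proof (induction rule: rtrancl_induct)
      case base then show ?case by simp
    next
      case (step y z)
      then have yz: "y \<in> X" "z \<in> X" "{y,z} \<in> T" by (auto simp: adj_def)
      have "(y,z) \<in> (adj X T')\<^sup>*"
      proof (cases "{y,z} = e")
        case False
        then have "(y,z) \<in> adj X T'" using yz T' by (auto simp: adj_def)
        then show ?thesis by auto
      next
        case True
        then have yzc: "(y = u \<and> z = v) \<or> (y = v \<and> z = u)" using e by (auto simp: doubleton_eq_iff)
        then have uvX: "u \<in> X" "v \<in> X" using yz by auto
        then have wX: "w \<in> X" using X by auto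
        have gc: "graph_connected (X \<inter> side V T e u) T"
          using side_restrict[OF T e X(2) uvX(1) X(1)] .
        have uw0: "(u,w) \<in> (adj (X \<inter> side V T e u) T)\<^sup>*"
          using gc wX w side_self[of u V T e] uvX unfolding graph_connected_def by auto
        moreover have sb: "adj (X \<inter> side V T e u) T \<subseteq> adj X T'"
        proof -
          have ne: "{c,d} \<noteq> e" if "c \<in> side V T e u" "d \<in> side V T e u" for c d
            using vn e that by (metis doubleton_eq_iff)
          show ?thesis using ne unfolding adj_def T' by blast
        qed
        have uw1: "(u,w) \<in> (adj X T')\<^sup>*" using rtrancl_mono[OF sb] uw0 by (rule subsetD)
        have wv1: "(w,v) \<in> adj X T'" using T' wX uvX by (auto simp: adj_def)
        have uv': "(u,v) \<in> (adj X T')\<^sup>*" using uw1 wv1 by (rule rtrancl.rtrancl_into_rtrancl)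
        have vu': "(v,u) \<in> (adj X T')\<^sup>*" by (rule rt_sym[OF uv'])
        show ?thesis using yzc uv' vu' by (elim disjE conjE) simp_all
      qed
      then show ?case using step.IH by (meson rtrancl_trans)
    qed
  qed


  show "\<not> graph_connected S T'" if S: "S \<subseteq> V" "u \<in> S" "v \<in> S" "w \<notin> S" for S
  proof
    assume "graph_connected S T'"
    then have "(u,v) \<in> (adj S T')\<^sup>*" using S unfolding graph_connected_def by auto
    then have "u \<in> side V T e u \<longleftrightarrow> v \<in> side V T e u"
    proof (rule closed_rt)
      fix c d assume "(c,d) \<in> adj S T'"
      then have cd: "c \<in> S" "d \<in> S" "{c,d} \<in> T'" by (auto simp: adj_def)
      then have "{c,d} \<noteq> {w,v}" using S by (auto simp: doubleton_eq_iff)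
      then have "{c,d} \<in> T" "{c,d} \<noteq> e" using cd T' by auto
      then show "c \<in> side V T e u \<longleftrightarrow> d \<in> side V T e u"
        using side_closed[of c V d T e u] cd S by auto
    qed
    then show False using vn side_self[of u V T e] by auto
  qed
qed


lemma closure_good:
  assumes "X \<in> gen_closure E" "hypergraph V E"
  shows "X \<noteq> {} \<and> X \<subseteq> V \<and> (\<forall>T. host_tree V E T \<longrightarrow> graph_connected X T)"
  using assms(1)
proof (induction rule: gen_closure.induct)
  case (base X)
  then show ?case using assms(2) by (auto simp: hypergraph_def host_tree_def)
next
  case (inter A B)
  have "finite V" using assms(2) by (simp add: hypergraph_def)
  then have "finite A" using inter finite_subset by blast
  then show ?case using inter inter_conn[of V _ A B] by (auto simp: host_tree_def)
next
  case (union F)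
  then show ?case using union_conn[of F] by auto
qed

lemma left_incl:
  assumes H: "hypertree V E" and X: "X \<in> comp_edges V E"
  shows "X \<noteq> {} \<and> X \<subseteq> V \<and> (\<forall>T. host_tree V E T \<longrightarrow> induces_subtree T X)"
proof -
  obtain T0 where "host_tree V E T0" using H by (auto simp: hypertree_def)
  then have "V \<noteq> {}" by (auto simp: host_tree_def is_tree_def)
  moreover have "graph_connected {v} T" for v :: 'a and T by (simp add: graph_connected_def)
  ultimately show ?thesis using X closure_good[of X E V] H
    by (auto simp: comp_edges_def induces_subtree_def hypertree_def host_tree_def is_tree_def)
qed

lemma right_incl:
  assumes H: "hypertree V E" and S: "S \<noteq> {}" "S \<subseteq> V"
    and all: "\<forall>T. host_tree V E T \<longrightarrow> induces_subtree T S"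
  shows "S \<in> comp_edges V E"
proof -
  obtain T0 where T0: "host_tree V E T0" using H by (auto simp: hypertree_def)
  have tree0: "is_tree V T0" using T0 by (simp add: host_tree_def)
  have hg: "hypergraph V E" using H by (simp add: hypertree_def)
  have finV: "finite V" using tree0 by (simp add: is_tree_def)
  have Sc: "graph_connected S T0" using all T0 by (simp add: induces_subtree_def)
  show ?thesis
  proof (cases "S = V \<or> (\<exists>v. S = {v})")
    case True
    then show ?thesis using S by (auto simp: comp_edges_def)
  next
    case False
    then have SV: "S \<subset> V" using S by auto
    have two: "\<exists>s'\<in>S. s' \<noteq> s" if "s \<in> S" for s using False that S by blast
    show ?thesis
    proof (cases "\<exists>u v w. (u,v) \<in> adj S T0 \<and> w \<in> V - S \<and> (\<forall>X\<in>#E. u \<in> X \<and> v \<in> X \<longrightarrow> w \<in> X)")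
      case True
      then obtain u v w where uvw: "(u,v) \<in> adj S T0" "w \<in> V - S"
        "\<forall>X\<in>#E. u \<in> X \<and> v \<in> X \<longrightarrow> w \<in> X" by blast
      define e where "e = {u,v}"
      have eT: "e \<in> T0" "u \<in> S" "v \<in> S" using uvw by (auto simp: adj_def e_def)
      have e': "e = {v,u}" by (simp add: e_def insert_commute)
      have "w \<in> side V T0 e u \<or> w \<in> side V T0 e v" using side_cover[OF tree0 e_def eT(1)] uvw by auto
      then show ?thesis
      proof
        assume w: "w \<in> side V T0 e u"
        define T' where "T' = (T0 - {e}) \<union> {{w,v}}"
        note sw = swap[OF tree0 e_def eT(1) w T'_def]
        have "host_tree V E T'" unfolding host_tree_def
          using sw(1) sw(2) uvw T0 hg by (auto simp: host_tree_def hypergraph_def)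
        then show ?thesis using all sw(3)[of S] S eT uvw by (auto simp: induces_subtree_def)
      next
        assume w: "w \<in> side V T0 e v"
        define T' where "T' = (T0 - {e}) \<union> {{w,u}}"
        note sw = swap[OF tree0 e' eT(1) w T'_def]
        have "host_tree V E T'" unfolding host_tree_def
          using sw(1) sw(2) uvw T0 hg by (auto simp: host_tree_def hypergraph_def)
        then show ?thesis using all sw(3)[of S] S eT uvw by (auto simp: induces_subtree_def)
      qed
    next
      case False
      then have nw: "\<And>u v w. (u,v) \<in> adj S T0 \<Longrightarrow> w \<in> V - S \<Longrightarrow> \<exists>X\<in>#E. u \<in> X \<and> v \<in> X \<and> w \<notin> X"
        by blast
      obtain w0 where w0: "w0 \<in> V - S" using SV by auto
      define K where "K a b = \<Inter>{X. X \<in># E \<and> a \<in> X \<and> b \<in> X}" for a b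
      define F where "F = (\<lambda>(a,b). K a b) ` adj S T0"
      have Kab: "a \<in> K a b" "b \<in> K a b" for a b by (auto simp: K_def)
      have Kcl: "K a b \<in> gen_closure E" if "(a,b) \<in> adj S T0" for a b
      proof -
        have "{X. X \<in># E \<and> a \<in> X \<and> b \<in> X} \<noteq> {}" using nw[OF that w0] by auto
        moreover have "finite {X. X \<in># E \<and> a \<in> X \<and> b \<in> X}"
          by (rule finite_subset[of _ "set_mset E"]) auto
        ultimately show ?thesis unfolding K_def
          using inter_closure[of "{X. X \<in># E \<and> a \<in> X \<and> b \<in> X}" E]
          by (auto intro: gen_closure.base)
      qed
      have KS: "K a b \<subseteq> S" if ab: "(a,b) \<in> adj S T0" for a b
      proof
        fix z assume z: "z \<in> K a b"
        obtain X where X: "X \<in># E" "a \<in> X" "b \<in> X" using nw[OF ab w0] by auto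
        then have "z \<in> V" using z hg by (auto simp: K_def hypergraph_def)
        show "z \<in> S"
        proof (rule ccontr)
          assume "z \<notin> S"
          then obtain Y where "Y \<in># E" "a \<in> Y" "b \<in> Y" "z \<notin> Y" using nw[OF ab] \<open>z \<in> V\<close> by blast
          then show False using z by (auto simp: K_def)
        qed
      qed
      have UF: "\<Union>F = S"
      proof
        show "\<Union>F \<subseteq> S" using KS by (auto simp: F_def)
        show "S \<subseteq> \<Union>F"
        proof
          fix s assume s: "s \<in> S"
          then obtain s' where s': "s' \<in> S" "s' \<noteq> s" using two by blast
          then have "(s,s') \<in> (adj S T0)\<^sup>*" using Sc s by (auto simp: graph_connected_def)
          then obtain y where "(s,y) \<in> adj S T0" using s' by (metis converse_rtranclE)
          then show "s \<in> \<Union>F" unfolding F_def using Kab by blast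
        qed
      qed
      have finS: "finite S" using SV finV finite_subset by auto
      have "adj S T0 \<subseteq> S \<times> S" by (auto simp: adj_def)
      then have finF: "finite F" unfolding F_def using finS by (meson finite_SigmaI finite_imageI finite_subset)
      have neF: "F \<noteq> {}" using UF S by auto
      have Fcl: "\<forall>A\<in>F. A \<in> gen_closure E" using Kcl by (auto simp: F_def)
      let ?r = "{(X, Y). X \<in> F \<and> Y \<in> F \<and> X \<inter> Y \<noteq> {}}"
      have KF: "K a b \<in> F" if "(a,b) \<in> adj S T0" for a b using that by (force simp: F_def)
      have path: "\<forall>z'. (z,z') \<in> adj S T0 \<longrightarrow> (K a b, K z z') \<in> ?r\<^sup>*"
        if ab: "(a,b) \<in> adj S T0" and az: "(a,z) \<in> (adj S T0)\<^sup>*" for a b z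
        using az
      proof (induction rule: rtrancl_induct)
        case base
        show ?case
        proof (intro allI impI)
          fix z' assume "(a,z') \<in> adj S T0"
          then have "(K a b, K a z') \<in> ?r" using KF ab Kab by blast
          then show "(K a b, K a z') \<in> ?r\<^sup>*" by auto
        qed
      next
        case (step y z)
        show ?case
        proof (intro allI impI)
          fix z' assume "(z,z') \<in> adj S T0"
          then have r1: "(K y z, K z z') \<in> ?r" using KF step.hyps(2) Kab by blast
          have r0: "(K a b, K y z) \<in> ?r\<^sup>*" using step.IH step.hyps(2) by blast
          show "(K a b, K z z') \<in> ?r\<^sup>*" using r0 r1 by (rule rtrancl.rtrancl_into_rtrancl)
        qed
      qed
      have "family_connected F" unfolding family_connected_def
      proof (intro ballI)
        fix A B assume "A \<in> F" "B \<in> F"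
        then obtain a b c d where abcd: "(a,b) \<in> adj S T0" "(c,d) \<in> adj S T0" "A = K a b" "B = K c d"
          by (auto simp: F_def)
        then have "(a,c) \<in> (adj S T0)\<^sup>*" using Sc by (auto simp: graph_connected_def adj_def)
        then show "(A,B) \<in> ?r\<^sup>*" using path[OF abcd(1)] abcd by auto
      qed
      then have "\<Union>F \<in> gen_closure E" using gen_closure.union[OF Fcl finF neF] by auto
      then show ?thesis using UF SV by (auto simp: comp_edges_def)
    qed
  qed
qed

theorem mainTheorem5:
  fixes V :: "'a set" and E :: "'a set multiset"
  assumes "hypertree V E"
  shows "comp_edges V E =
           {S. S \<noteq> {} \<and> S \<subseteq> V \<and> (\<forall>T. host_tree V E T \<longrightarrow> induces_subtree T S)}
         \<and> (\<forall>E'. hypertree V E' \<and> equivalent V E E' \<longrightarrow> simp_edges E' \<subseteq> comp_edges V E)"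
proof
  show eq: "comp_edges V E =
           {S. S \<noteq> {} \<and> S \<subseteq> V \<and> (\<forall>T. host_tree V E T \<longrightarrow> induces_subtree T S)}"
    using left_incl[OF assms] right_incl[OF assms] by blast
  show "\<forall>E'. hypertree V E' \<and> equivalent V E E' \<longrightarrow> simp_edges E' \<subseteq> comp_edges V E"
  proof (intro allI impI subsetI)
    fix E' X assume H: "hypertree V E' \<and> equivalent V E E'" and X: "X \<in> simp_edges E'"
    then have "X \<in># E'" by (simp add: simp_edges_def)
    then have "X \<noteq> {}" "X \<subseteq> V" "\<forall>T. host_tree V E' T \<longrightarrow> graph_connected X T"
      using H by (auto simp: hypertree_def hypergraph_def host_tree_def)
    then show "X \<in> comp_edges V E" using H eq
      by (auto simp: equivalent_def induces_subtree_def)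
  qed
qed

end
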